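(* Let $\Gamma_1,\Gamma_2$ be propositional theories over $\mathcal L$ and $A^+,A^-$ sets of atoms. Then $\Gamma_1$ and $\Gamma_2$ are relativized hyperequivalent w.r.t. $A^+$ and $A^-$ if and only if $E^{A^+}_{A^-}(\Gamma_1)=E^{A^+}_{A^-}(\Gamma_2)$.
   Context: Formulas are built from atoms and $\bot$ with $\wedge,\vee,\to$; $\neg\phi$ abbreviates $\phi\to\bot$. Let $\mathcal L^*=\mathcal L\cup A^+\cup A^-$; all HT-interpretations are over $\mathcal L^*$, i.e. pairs $(X,Y)$ with $X\subseteq Y\subseteq\mathcal L^*$, total if $X=Y$. HT-satisfaction: $(X,Y)\models a$ iff $a\in X$; $(X,Y)\not\models\bot$; $\wedge,\vee$ componentwise; $(X,Y)\models\phi\to\psi$ iff (i) $(X,Y)\not\models\phi$ or $(X,Y)\models\psi$, and (ii) $Y\models\phi\to\psi$ classically. $Y$ is an answer set of $\Gamma$ iff $(Y,Y)\models\Gamma$ and $(X,Y)\not\models\Gamma$ for all $X\subsetneq Y$. Polarity of occurrences is defined recursively: the occurrence of $\phi$ in itself is positive; occurrences of $\psi_1,\psi_2$ in a positive (resp. negative) occurrence of $\psi_1\wedge\psi_2$ or $\psi_1\vee\psi_2$ are positive (resp. negative); in an occurrence of $\psi_1\to\psi_2$, $\psi_1$ is negative and $\psi_2$ positive, and if that occurrence is negative then additionally $\psi_1$ is positive and $\psi_2$ negative (occurrences may be both). An $A^+$-$A^-$-theory is a theory over $A^+\cup A^-$ in whose formulas every positive occurrence of an atom is in $A^+$ and every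 negative occurrence of an atom is in $A^-$ ($\bot$ unrestricted). $\Gamma_1,\Gamma_2$ are relativized hyperequivalent w.r.t. $A^+,A^-$ iff for every $A^+$-$A^-$-theory $\Gamma$, $\Gamma_1\cup\Gamma$ and $\Gamma_2\cup\Gamma$ have the same answer sets. For a set $X$ and $A$, $X|_A=X\cap A$. $E_s(\Gamma)$ is the set of HT-interpretations that are total HT-models of $\Gamma$ or here-countermodels of $\Gamma$ ($(X,Y)\not\models\Gamma$ and $Y\models\Gamma$). $(X,Y)$ is closed in a set $S$ if $(X',Y)\in S$ for all $X\subseteq X'\subseteq Y$. $(Y,Y)$ is $A^+$-total (for $\Gamma$) iff $(Y|_{A^+},Y)$ is closed in $E_s(\Gamma)$. $(X,Y)$ is $A^+$-closed in $E_s(\Gamma)$ iff $(X',Y)\in E_s(\Gamma)$ for all $X'\subseteq Y$ with $X|_{A^+}\subseteq X'|_{A^+}$ and $X'|_{A^-}\subseteq X|_{A^-}$. $E^{A^+}_{A^-}(\Gamma)$ (HT-hyperequivalence interpretations) is the set of HT-interpretations $(X,Y)$ such that $(Y,Y)$ is $A^+$-total and there is $X'\subseteq Y$ with $X=X'|_{A^+\cup A^-}$ and $(X',Y)$ $A^+$-closed in $E_s(\Gamma)$. *)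

theory Defs
  imports Main
begin

datatype 'a frm = Atom 'a | Bot | And "'a frm" "'a frm" | Or "'a frm" "'a frm" | Imp "'a frm" "'a frm"

definition Neg :: "'a frm \<Rightarrow> 'a frm" where "Neg \<phi> = Imp \<phi> Bot"

fun atoms :: "'a frm \<Rightarrow> 'a set" where
  "atoms (Atom a) = {a}"
| "atoms Bot = {}"
| "atoms (And \<phi> \<psi>) = atoms \<phi> \<union> atoms \<psi>"
| "atoms (Or \<phi> \<psi>) = atoms \<phi> \<union> atoms \<psi>"
| "atoms (Imp \<phi> \<psi>) = atoms \<phi> \<union> atoms \<psi>"

fun csat :: "'a set \<Rightarrow> 'a frm \<Rightarrow> bool" where
  "csat Y (Atom a) = (a \<in> Y)"
| "csat Y Bot = False"
| "csat Y (And \<phi> \<psi>) = (csat Y \<phi> \<and> csat Y \<psi>)"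
| "csat Y (Or \<phi> \<psi>) = (csat Y \<phi> \<or> csat Y \<psi>)"
| "csat Y (Imp \<phi> \<psi>) = (csat Y \<phi> \<longrightarrow> csat Y \<psi>)"

fun htsat :: "'a set \<Rightarrow> 'a set \<Rightarrow> 'a frm \<Rightarrow> bool" where
  "htsat X Y (Atom a) = (a \<in> X)"
| "htsat X Y Bot = False"
| "htsat X Y (And \<phi> \<psi>) = (htsat X Y \<phi> \<and> htsat X Y \<psi>)"
| "htsat X Y (Or \<phi> \<psi>) = (htsat X Y \<phi> \<or> htsat X Y \<psi>)"
| "htsat X Y (Imp \<phi> \<psi>) = ((\<not> htsat X Y \<phi> \<or> htsat X Y \<psi>) \<and> csat Y (Imp \<phi> \<psi>))"

definition cmodels :: "'a set \<Rightarrow> 'a frm set \<Rightarrow> bool" where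
  "cmodels Y \<Gamma> = (\<forall>\<phi>\<in>\<Gamma>. csat Y \<phi>)"

definition htmodels :: "'a set \<Rightarrow> 'a set \<Rightarrow> 'a frm set \<Rightarrow> bool" where
  "htmodels X Y \<Gamma> = (\<forall>\<phi>\<in>\<Gamma>. htsat X Y \<phi>)"

text \<open>Answer sets; interpretations range over the atom universe U (= L*).\<close>
definition answer_set :: "'a set \<Rightarrow> 'a frm set \<Rightarrow> 'a set \<Rightarrow> bool" where
  "answer_set U \<Gamma> Y = (Y \<subseteq> U \<and> htmodels Y Y \<Gamma> \<and> (\<forall>X. X \<subset> Y \<longrightarrow> \<not> htmodels X Y \<Gamma>))"

text \<open>Polarity of atom occurrences: occ p n \<phi> collects pairs (a, True) for positive
  and (a, False) for negative occurrences of atoms inside an occurrence of \<phi> that is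
  positive iff p and negative iff n.\<close>
fun occ :: "bool \<Rightarrow> bool \<Rightarrow> 'a frm \<Rightarrow> ('a \<times> bool) set" where
  "occ p n (Atom a) = (if p then {(a, True)} else {}) \<union> (if n then {(a, False)} else {})"
| "occ p n Bot = {}"
| "occ p n (And \<phi> \<psi>) = occ p n \<phi> \<union> occ p n \<psi>"
| "occ p n (Or \<phi> \<psi>) = occ p n \<phi> \<union> occ p n \<psi>"
| "occ p n (Imp \<phi> \<psi>) = occ n True \<phi> \<union> occ True n \<psi>"

definition pos_atoms :: "'a frm \<Rightarrow> 'a set" where
  "pos_atoms \<phi> = {a. (a, True) \<in> occ True False \<phi>}"

definition neg_atoms :: "'a frm \<Rightarrow> 'a set" where
  "neg_atoms \<phi> = {a. (a, False) \<in> occ True False \<phi>}"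

definition pm_theory :: "'a set \<Rightarrow> 'a set \<Rightarrow> 'a frm set \<Rightarrow> bool" where
  "pm_theory Ap Am \<Gamma> = (\<forall>\<phi>\<in>\<Gamma>. atoms \<phi> \<subseteq> Ap \<union> Am \<and> pos_atoms \<phi> \<subseteq> Ap \<and> neg_atoms \<phi> \<subseteq> Am)"

definition rel_hyperequiv :: "'a set \<Rightarrow> 'a set \<Rightarrow> 'a set \<Rightarrow> 'a frm set \<Rightarrow> 'a frm set \<Rightarrow> bool" where
  "rel_hyperequiv L Ap Am \<Gamma>1 \<Gamma>2 =
     (\<forall>\<Gamma>. pm_theory Ap Am \<Gamma> \<longrightarrow>
        (\<forall>Y. answer_set (L \<union> Ap \<union> Am) (\<Gamma>1 \<union> \<Gamma>) Y = answer_set (L \<union> Ap \<union> Am) (\<Gamma>2 \<union> \<Gamma>) Y))"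

definition Es :: "'a set \<Rightarrow> 'a frm set \<Rightarrow> ('a set \<times> 'a set) set" where
  "Es U \<Gamma> = {(X, Y). X \<subseteq> Y \<and> Y \<subseteq> U \<and>
      ((X = Y \<and> htmodels Y Y \<Gamma>) \<or> (\<not> htmodels X Y \<Gamma> \<and> cmodels Y \<Gamma>))}"

definition closed_in :: "'a set \<Rightarrow> 'a set \<Rightarrow> ('a set \<times> 'a set) set \<Rightarrow> bool" where
  "closed_in X Y S = (\<forall>X'. X \<subseteq> X' \<and> X' \<subseteq> Y \<longrightarrow> (X', Y) \<in> S)"

definition Ap_total :: "'a set \<Rightarrow> 'a set \<Rightarrow> 'a frm set \<Rightarrow> 'a set \<Rightarrow> bool" where
  "Ap_total U Ap \<Gamma> Y = closed_in (Y \<inter> Ap) Y (Es U \<Gamma>)"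

definition Ap_closed :: "'a set \<Rightarrow> 'a set \<Rightarrow> 'a set \<Rightarrow> 'a frm set \<Rightarrow> 'a set \<Rightarrow> 'a set \<Rightarrow> bool" where
  "Ap_closed U Ap Am \<Gamma> X Y = (\<forall>X'. X' \<subseteq> Y \<and> X \<inter> Ap \<subseteq> X' \<inter> Ap \<and> X' \<inter> Am \<subseteq> X \<inter> Am
       \<longrightarrow> (X', Y) \<in> Es U \<Gamma>)"

definition E_hyp :: "'a set \<Rightarrow> 'a set \<Rightarrow> 'a set \<Rightarrow> 'a frm set \<Rightarrow> ('a set \<times> 'a set) set" where
  "E_hyp L Ap Am \<Gamma> = (let U = L \<union> Ap \<union> Am in
     {(X, Y). X \<subseteq> Y \<and> Y \<subseteq> U \<and> Ap_total U Ap \<Gamma> Y \<and>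
        (\<exists>X'. X' \<subseteq> Y \<and> X = X' \<inter> (Ap \<union> Am) \<and> Ap_closed U Ap Am \<Gamma> X' Y)})"

end

theory Submission
  imports Defs
begin

definition lep :: "'a set \<Rightarrow> 'a set \<Rightarrow> 'a set \<Rightarrow> 'a set \<Rightarrow> bool" where
  "lep Ap Am X Z = (X \<inter> Ap \<subseteq> Z \<inter> Ap \<and> Z \<inter> Am \<subseteq> X \<inter> Am)"

lemma htsat_total: "htsat Y Y \<phi> = csat Y \<phi>"
  by (induction \<phi>) auto

lemma htmodels_total: "htmodels Y Y G = cmodels Y G"
  by (simp add: htmodels_def cmodels_def htsat_total)

lemma mono_gen:
  "(\<forall>a. (a,True) \<in> occ p n \<phi> \<longrightarrow> a \<in> Ap) \<Longrightarrow> (\<forall>a. (a,False) \<in> occ p n \<phi> \<longrightarrow> a \<in> Am)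
   \<Longrightarrow> lep Ap Am X Z \<Longrightarrow> (p \<longrightarrow> htsat X Y \<phi> \<longrightarrow> htsat Z Y \<phi>) \<and> (n \<longrightarrow> htsat Z Y \<phi> \<longrightarrow> htsat X Y \<phi>)"
proof (induction \<phi> arbitrary: p n)
  case (Atom x)
  then show ?case by (auto simp: lep_def)
next
  case Bot
  then show ?case by simp
next
  case (And \<phi>1 \<phi>2)
  show ?case using And.IH(1)[of p n] And.IH(2)[of p n] And.prems by auto
next
  case (Or \<phi>1 \<phi>2)
  show ?case using Or.IH(1)[of p n] Or.IH(2)[of p n] Or.prems by auto
next
  case (Imp \<phi>1 \<phi>2)
  have h1: "(n \<longrightarrow> htsat X Y \<phi>1 \<longrightarrow> htsat Z Y \<phi>1) \<and> (True \<longrightarrow> htsat Z Y \<phi>1 \<longrightarrow> htsat X Y \<phi>1)"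
    using Imp.IH(1)[of n True] Imp.prems by auto
  have h2: "(True \<longrightarrow> htsat X Y \<phi>2 \<longrightarrow> htsat Z Y \<phi>2) \<and> (n \<longrightarrow> htsat Z Y \<phi>2 \<longrightarrow> htsat X Y \<phi>2)"
    using Imp.IH(2)[of True n] Imp.prems by auto
  show ?case using h1 h2 by auto
qed

lemma mono_pm:
  assumes "pm_theory Ap Am D" "lep Ap Am X Z" "htmodels X Y D"
  shows "htmodels Z Y D"
  unfolding htmodels_def
proof
  fix \<phi> assume p: "\<phi> \<in> D"
  have "(True \<longrightarrow> htsat X Y \<phi> \<longrightarrow> htsat Z Y \<phi>) \<and> (False \<longrightarrow> htsat Z Y \<phi> \<longrightarrow> htsat X Y \<phi>)"
    apply (rule mono_gen[where Ap=Ap and Am=Am])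
    using assms(1) p assms(2) by (auto simp: pm_theory_def pos_atoms_def neg_atoms_def)
  then show "htsat Z Y \<phi>" using assms(3) p by (auto simp: htmodels_def)
qed

lemma total_closed: "Ap_total U Ap G Y = Ap_closed U Ap Am G Y Y"
  unfolding Ap_total_def Ap_closed_def closed_in_def by blast

lemma lep_trans: "lep Ap Am X Z \<Longrightarrow> lep Ap Am Z W \<Longrightarrow> lep Ap Am X W"
  unfolding lep_def by blast

lemma Ap_closed_lep: "Ap_closed U Ap Am G X Y = (\<forall>X'. X' \<subseteq> Y \<and> lep Ap Am X X' \<longrightarrow> (X', Y) \<in> Es U G)"
  unfolding Ap_closed_def lep_def by blast

lemma Ap_closed_trans: "Ap_closed U Ap Am G X Y \<Longrightarrow> lep Ap Am X Z \<Longrightarrow> Ap_closed U Ap Am G Z Y"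
  unfolding Ap_closed_lep using lep_trans by blast

lemma char:
  assumes "pm_theory Ap Am D"
  shows "answer_set U (G \<union> D) Y \<longleftrightarrow> Y \<subseteq> U \<and> cmodels Y D \<and> Ap_total U Ap G Y \<and>
     (\<forall>X. X \<subseteq> Y \<and> htmodels X Y D \<longrightarrow> Ap_closed U Ap Am G X Y)"
proof
  assume as: "answer_set U (G \<union> D) Y"
  hence YU: "Y \<subseteq> U" and tot: "htmodels Y Y (G \<union> D)"
    and mn: "\<forall>X. X \<subset> Y \<longrightarrow> \<not> htmodels X Y (G \<union> D)" by (auto simp: answer_set_def)
  have cG: "cmodels Y G" and cD: "cmodels Y D"
    using tot by (auto simp: htmodels_total[symmetric] htmodels_def)
  have cl: "Ap_closed U Ap Am G X Y" if "X \<subseteq> Y" "htmodels X Y D" for X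
    unfolding Ap_closed_lep
  proof (intro allI impI)
    fix X' assume h: "X' \<subseteq> Y \<and> lep Ap Am X X'"
    hence hD: "htmodels X' Y D" using mono_pm[OF assms] that by blast
    show "(X', Y) \<in> Es U G"
    proof (cases "X' = Y")
      case True
      then show ?thesis using YU cG by (auto simp: Es_def htmodels_total)
    next
      case False
      hence "\<not> htmodels X' Y (G \<union> D)" using mn h by blast
      hence "\<not> htmodels X' Y G" using hD by (auto simp: htmodels_def)
      then show ?thesis using h YU cG by (auto simp: Es_def)
    qed
  qed
  have "Ap_total U Ap G Y" unfolding total_closed[where Am=Am]
    using cl[of Y] cD by (simp add: htmodels_total)
  then show "Y \<subseteq> U \<and> cmodels Y D \<and> Ap_total U Ap G Y \<and>
     (\<forall>X. X \<subseteq> Y \<and> htmodels X Y D \<longrightarrow> Ap_closed U Ap Am G X Y)"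
    using YU cD cl by blast
next
  assume h: "Y \<subseteq> U \<and> cmodels Y D \<and> Ap_total U Ap G Y \<and>
     (\<forall>X. X \<subseteq> Y \<and> htmodels X Y D \<longrightarrow> Ap_closed U Ap Am G X Y)"
  hence "(Y, Y) \<in> Es U G" unfolding Ap_total_def closed_in_def by blast
  hence cG: "cmodels Y G" by (auto simp: Es_def htmodels_total)
  have "\<not> htmodels X Y (G \<union> D)" if "X \<subset> Y" for X
  proof
    assume hm: "htmodels X Y (G \<union> D)"
    hence "Ap_closed U Ap Am G X Y" using h that by (auto simp: htmodels_def)
    hence "(X, Y) \<in> Es U G" unfolding Ap_closed_lep lep_def using that by blast
    then show False using hm that by (auto simp: Es_def htmodels_def)
  qed
  then show "answer_set U (G \<union> D) Y" using h cG
    by (auto simp: answer_set_def htmodels_total cmodels_def)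
qed

lemma Ap_closed_cong:
  "X \<inter> (Ap \<union> Am) = X'' \<inter> (Ap \<union> Am) \<Longrightarrow> Ap_closed U Ap Am G X Y = Ap_closed U Ap Am G X'' Y"
  unfolding Ap_closed_def by blast

lemma total_E:
  "Y \<subseteq> L \<union> Ap \<union> Am \<Longrightarrow> Ap_total (L \<union> Ap \<union> Am) Ap G Y \<longleftrightarrow> (Y \<inter> (Ap \<union> Am), Y) \<in> E_hyp L Ap Am G"
  unfolding E_hyp_def Let_def using total_closed[where Am=Am] by auto

lemma closed_E:
  assumes "Y \<subseteq> L \<union> Ap \<union> Am" "Ap_total (L \<union> Ap \<union> Am) Ap G Y" "X \<subseteq> Y"
  shows "Ap_closed (L \<union> Ap \<union> Am) Ap Am G X Y \<longleftrightarrow> (X \<inter> (Ap \<union> Am), Y) \<in> E_hyp L Ap Am G"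
proof
  assume "Ap_closed (L \<union> Ap \<union> Am) Ap Am G X Y"
  then show "(X \<inter> (Ap \<union> Am), Y) \<in> E_hyp L Ap Am G"
    using assms unfolding E_hyp_def Let_def by auto
next
  assume "(X \<inter> (Ap \<union> Am), Y) \<in> E_hyp L Ap Am G"
  then obtain X'' where "X \<inter> (Ap \<union> Am) = X'' \<inter> (Ap \<union> Am)" "Ap_closed (L \<union> Ap \<union> Am) Ap Am G X'' Y"
    unfolding E_hyp_def Let_def by auto
  then show "Ap_closed (L \<union> Ap \<union> Am) Ap Am G X Y" using Ap_closed_cong by metis
qed

lemma dir:
  assumes "rel_hyperequiv L Ap Am G1 G2"
  shows "E_hyp L Ap Am G1 \<subseteq> E_hyp L Ap Am G2"
proof
  fix p assume "p \<in> E_hyp L Ap Am G1"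
  then obtain X Y X1 where p: "p = (X, Y)" and XY: "X \<subseteq> Y" and YU: "Y \<subseteq> L \<union> Ap \<union> Am"
    and tot: "Ap_total (L \<union> Ap \<union> Am) Ap G1 Y"
    and X1: "X1 \<subseteq> Y" "X = X1 \<inter> (Ap \<union> Am)" "Ap_closed (L \<union> Ap \<union> Am) Ap Am G1 X1 Y"
    unfolding E_hyp_def Let_def by auto
  define D where "D = Atom ` (X1 \<inter> Ap) \<union>
     {Imp (Atom b) (Atom a) | b a. b \<in> (Y \<inter> Am) - X1 \<and> a \<in> (Y - X1) \<inter> Ap}"
  have pm: "pm_theory Ap Am D"
    unfolding pm_theory_def D_def pos_atoms_def neg_atoms_def by auto
  have cD: "cmodels Y D" unfolding cmodels_def D_def using X1(1) by auto
  have hX1: "htmodels X1 Y D" unfolding htmodels_def D_def by auto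
  have cl1: "Ap_closed (L \<union> Ap \<union> Am) Ap Am G1 Z Y" if "Z \<subseteq> Y" "htmodels Z Y D" for Z
  proof -
    have f1: "X1 \<inter> Ap \<subseteq> Z"
    proof
      fix x assume "x \<in> X1 \<inter> Ap"
      hence "Atom x \<in> D" unfolding D_def by blast
      then show "x \<in> Z" using that(2) unfolding htmodels_def by force
    qed
    have f2: "b \<in> Z \<Longrightarrow> a \<in> Z" if "b \<in> (Y \<inter> Am) - X1" "a \<in> (Y - X1) \<inter> Ap" for a b
    proof -
      have "Imp (Atom b) (Atom a) \<in> D" using that unfolding D_def by blast
      then show "b \<in> Z \<Longrightarrow> a \<in> Z" using \<open>htmodels Z Y D\<close> unfolding htmodels_def by auto
    qed
    show ?thesis
    proof (cases "Z \<inter> Am \<subseteq> X1")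
      case True
      hence "lep Ap Am X1 Z" using f1 unfolding lep_def by blast
      then show ?thesis using Ap_closed_trans X1(3) by blast
    next
      case False
      then obtain b where b: "b \<in> Z" "b \<in> Am" "b \<notin> X1" by blast
      have "Y \<inter> Ap \<subseteq> Z"
      proof
        fix a assume a: "a \<in> Y \<inter> Ap"
        show "a \<in> Z"
        proof (cases "a \<in> X1")
          case True then show ?thesis using f1 a by blast
        next
          case False then show ?thesis using f2[of b a] b a that(1) by blast
        qed
      qed
      hence "lep Ap Am Y Z" using that(1) unfolding lep_def by blast
      then show ?thesis using Ap_closed_trans tot total_closed by metis
    qed
  qed
  have "answer_set (L \<union> Ap \<union> Am) (G1 \<union> D) Y"
    using char[OF pm] YU cD tot cl1 by blast
  hence "answer_set (L \<union> Ap \<union> Am) (G2 \<union> D) Y"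
    using assms pm unfolding rel_hyperequiv_def by blast
  hence tot2: "Ap_total (L \<union> Ap \<union> Am) Ap G2 Y" and "Ap_closed (L \<union> Ap \<union> Am) Ap Am G2 X1 Y"
    using char[OF pm] hX1 X1(1) by blast+
  then show "p \<in> E_hyp L Ap Am G2" unfolding p E_hyp_def Let_def using XY YU X1 by blast
qed

lemma rel_sym: "rel_hyperequiv L Ap Am G1 G2 \<Longrightarrow> rel_hyperequiv L Ap Am G2 G1"
  unfolding rel_hyperequiv_def by metis

theorem mainTheorem11:
  fixes L Ap Am :: "'a set" and \<Gamma>1 \<Gamma>2 :: "'a frm set"
  assumes "\<forall>\<phi>\<in>\<Gamma>1. atoms \<phi> \<subseteq> L"
      and "\<forall>\<phi>\<in>\<Gamma>2. atoms \<phi> \<subseteq> L"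
  shows "rel_hyperequiv L Ap Am \<Gamma>1 \<Gamma>2 \<longleftrightarrow> E_hyp L Ap Am \<Gamma>1 = E_hyp L Ap Am \<Gamma>2"
proof
  assume "rel_hyperequiv L Ap Am \<Gamma>1 \<Gamma>2"
  then show "E_hyp L Ap Am \<Gamma>1 = E_hyp L Ap Am \<Gamma>2"
    using dir rel_sym by (metis subset_antisym)
next
  assume E: "E_hyp L Ap Am \<Gamma>1 = E_hyp L Ap Am \<Gamma>2"
  show "rel_hyperequiv L Ap Am \<Gamma>1 \<Gamma>2"
    unfolding rel_hyperequiv_def
  proof (intro allI impI)
    fix D Y assume pm: "pm_theory Ap Am D"
    show "answer_set (L \<union> Ap \<union> Am) (\<Gamma>1 \<union> D) Y = answer_set (L \<union> Ap \<union> Am) (\<Gamma>2 \<union> D) Y"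
    proof (cases "Y \<subseteq> L \<union> Ap \<union> Am")
      case True
      have t: "Ap_total (L \<union> Ap \<union> Am) Ap \<Gamma>1 Y = Ap_total (L \<union> Ap \<union> Am) Ap \<Gamma>2 Y"
        using total_E[OF True] E by metis
      have c: "Ap_closed (L \<union> Ap \<union> Am) Ap Am \<Gamma>1 X Y = Ap_closed (L \<union> Ap \<union> Am) Ap Am \<Gamma>2 X Y"
        if "X \<subseteq> Y" "Ap_total (L \<union> Ap \<union> Am) Ap \<Gamma>1 Y" for X
        using closed_E[OF True that(2,1)] closed_E[OF True _ that(1), of \<Gamma>2] t that(2) E by metis
      show ?thesis unfolding char[OF pm] using t c by blast
    next
      case False
      then show ?thesis unfolding char[OF pm] by blast
    qed
  qed
qed

end
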